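(* (a) For every $\alpha\in K$ and every integer $\ell\ge0$, $$\widetilde I^{(-\ell-1)}_\alpha(\lambda)=\mathrm{rk}(\alpha)\frac{\lambda^{\ell+1}}{(\ell+1)!}\phi_{0,0}+\frac{\lambda^\ell}{\ell!}\Big(\frac{1}{n-2}\mathrm{rk}(\alpha)(\log\lambda-C_\ell)+2\pi\mathbf{i}\deg(\alpha)\Big)\phi_{0,1}+\sum_{j=1}^3\sum_{p=1}^{a_j-1}\frac{\lambda^{\ell+1-p/a_j}}{(\ell+1-\frac p{a_j})\cdots(1-\frac p{a_j})}\chi_{j,p}(\alpha)\phi_{j,p},$$ where $C_0:=(n-2)\log Q$ and $C_{\ell+1}=C_\ell+\frac1{\ell+1}$. (b) $\sigma(\alpha)=\alpha\cdot T$ for all $\alpha\in K$, where $T=L_1+L_2+L_3-L-1$ is the class of the tangent bundle of $X$. (c) $\sigma(\epsilon^1_i)=\epsilon^1_{i+1}$ for $1\le i\le n-3$, $\sigma(\epsilon^1_{n-2})=\epsilon^1_1+L-1$, $\sigma(\epsilon^2_1)=-\epsilon^2_1+L-1$, $\sigma(\epsilon^3_1)=-\epsilon^3_1$.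
   Context: Fix an integer $n\ge3$; $a_0=1$, $a_1=n-2$, $a_2=a_3=2$; $X=\mathbb{P}^1_{n-2,2,2}$ (orbifold projective line $[Z/G]$ with $G=\{t\in(\mathbb{C}^* )^3:t_1^{n-2}=t_2^2=t_3^2\}$, $Z=\{z_1^{n-2}+z_2^2+z_3^2=0\}\subset\mathbb{C}^3\setminus\{0\}$). $H$ is its Chen–Ruan cohomology with basis $\phi_{0,0}=1$, $\phi_{0,1}=P$ (hyperplane class), $\phi_{i,p}$ ($1\le i\le3$, $1\le p\le a_i-1$) unit classes of twisted sectors. $\theta(\phi_{i,p})=(\frac12-\frac p{a_i})\phi_{i,p}$, $\rho\phi_{0,0}=\frac1{n-2}\phi_{0,1}$, $\rho$ kills the other basis vectors. $Q\in\mathbb{C}^*$ with a fixed $\log Q$. $K=\mathbb{Z}[L_1,L_2,L_3]/\langle L_i^{a_i}-L_j^{a_j},(L_i-1)(L_j-1):i\neq j\rangle$ (the orbifold $K$-ring of $X$), $L:=L_1^{n-2}$. $\mathrm{rk}$ is the ring map $L_i\mapsto1$; $\deg$ is additive with $\deg(1)=0$, $\deg(L_i)=1/a_i$, $\deg(EF)=\mathrm{rk}(E)\deg(F)+\mathrm{rk}(F)\deg(E)$; $\chi_{j,p}$ is the ring map $K\to\mathbb{C}$ with $\chi_{j,p}(L_i)=e^{-2\pi\mathbf{i}p\delta_{j,i}/a_j}$. Iritani's map $\Psi(E)=\mathrm{rk}(E)(1-\frac{\gamma}{n-2}P)+2\pi\mathbf{i}\deg(E)P+\sum_{j=1}^3\sum_{p=1}^{a_j-1}\Gamma(1-\frac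 p{a_j})\chi_{j,p}(E)\phi_{j,p}$, $\gamma=-\Gamma'(1)+(n-2)\log Q$. For integers $m\le-1$, $\widetilde I^{(m)}(\lambda)=e^{-\rho\partial_\lambda\partial_m}\big(\lambda^{\theta-m-\frac12}/\Gamma(\theta-m+\frac12)\big)$ (operator on $H$; $\partial_m$ differentiates in $m$ as a continuous parameter), extended to all $m\in\mathbb{Z}$ by $\partial_\lambda\widetilde I^{(m)}=\widetilde I^{(m+1)}$; for $\alpha\in K$, $\widetilde I^{(m)}_\alpha(\lambda):=\widetilde I^{(m)}(\lambda)\Psi(\alpha)$ (multivalued in $\lambda$). $\sigma:K\to K$ is the classical monodromy: analytic continuation of $\widetilde I^{(m)}_\alpha(\lambda)$ counterclockwise around $\lambda=0$ equals $\widetilde I^{(m)}_{\sigma(\alpha)}(\lambda)$. Finally $\epsilon^1_i=L_1^i+\frac12(L_2+L_3)-1$ ($1\le i\le n-2$), $\epsilon^2_1=\frac12(L_2+L_3)-1$, $\epsilon^3_1=\frac12(L_2-L_3)$ (in $K\otimes\mathbb{Q}$, $\sigma$ extended linearly). *)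

theory Defs
  imports "HOL-Analysis.Analysis" "HOL-Computational_Algebra.Polynomial" "HOL-Library.Function_Algebras"
begin

(* Elements of K (and K tensor Q) are represented by polynomials in L1,L2,L3:
   complex poly poly poly, innermost variable L1, middle L2, outermost L3.
   K itself = integer-coefficient polynomials modulo the ideal of relations;
   all functions below (rk, deg, chi, Psi, I~) respect that ideal. *)
type_synonym kpoly = "complex poly poly poly"

(* vectors of H: coordinates w.r.t. the basis phi_{i,p}, indexed by (i,p) *)
type_synonym hvec = "nat \<times> nat \<Rightarrow> complex"

definition a :: "nat \<Rightarrow> nat \<Rightarrow> nat" where
  "a n j = (if j = 0 then 1 else if j = 1 then n - 2 else 2)"

definition phi :: "nat \<Rightarrow> nat \<Rightarrow> hvec" where
  "phi i p = (\<lambda>k. if k = (i, p) then 1 else 0)"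

definition scaleH :: "complex \<Rightarrow> hvec \<Rightarrow> hvec" where
  "scaleH c v = (\<lambda>k. c * v k)"

definition ev3 :: "kpoly \<Rightarrow> complex \<Rightarrow> complex \<Rightarrow> complex \<Rightarrow> complex" where
  "ev3 P x1 x2 x3 = poly (map_poly (\<lambda>q. poly (map_poly (\<lambda>r. poly r x1) q) x2) P) x3"

definition L1 :: kpoly where "L1 = [:[:[:0, 1:]:]:]"
definition L2 :: kpoly where "L2 = [:[:0, 1:]:]"
definition L3 :: kpoly where "L3 = [:0, 1:]"
definition cst :: "complex \<Rightarrow> kpoly" where "cst c = [:[:[:c:]:]:]"

definition Lcls :: "nat \<Rightarrow> kpoly" where "Lcls n = L1 ^ (n - 2)"
definition Tcls :: "nat \<Rightarrow> kpoly" where "Tcls n = L1 + L2 + L3 - Lcls n - 1"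

definition Kint :: "kpoly \<Rightarrow> bool" where
  "Kint P \<longleftrightarrow> (\<forall>i j k. coeff (coeff (coeff P i) j) k \<in> \<int>)"

definition rk :: "kpoly \<Rightarrow> complex" where "rk P = ev3 P 1 1 1"

definition d1 :: "kpoly \<Rightarrow> kpoly" where "d1 P = map_poly (map_poly pderiv) P"
definition d2 :: "kpoly \<Rightarrow> kpoly" where "d2 P = map_poly pderiv P"
definition d3 :: "kpoly \<Rightarrow> kpoly" where "d3 P = pderiv P"

(* the unique additive Leibniz map with deg 1 = 0, deg L_i = 1/a_i *)
definition degK :: "nat \<Rightarrow> kpoly \<Rightarrow> complex" where
  "degK n P = rk (d1 P) / of_nat (a n 1) + rk (d2 P) / of_nat (a n 2) + rk (d3 P) / of_nat (a n 3)"

definition chi :: "nat \<Rightarrow> nat \<Rightarrow> nat \<Rightarrow> kpoly \<Rightarrow> complex" where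
  "chi n j p P = (let z = (\<lambda>i. if i = j then exp (- 2 * pi * \<i> * of_nat p / of_nat (a n j)) else 1)
                  in ev3 P (z 1) (z 2) (z 3))"

definition gammaC :: "nat \<Rightarrow> complex \<Rightarrow> complex" where
  "gammaC n logQ = - deriv Gamma 1 + of_nat (n - 2) * logQ"

definition Psi :: "nat \<Rightarrow> complex \<Rightarrow> kpoly \<Rightarrow> hvec" where
  "Psi n logQ E =
     scaleH (rk E) (phi 0 0 - scaleH (gammaC n logQ / of_nat (n - 2)) (phi 0 1))
   + scaleH (2 * pi * \<i> * degK n E) (phi 0 1)
   + (\<Sum>j\<in>{1..3}. \<Sum>p\<in>{1..a n j - 1}.
        scaleH (Gamma (1 - of_nat p / of_nat (a n j)) * chi n j p E) (phi j p))"

definition theta :: "nat \<Rightarrow> nat \<times> nat \<Rightarrow> complex" where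
  "theta n k = 1/2 - of_nat (snd k) / of_nat (a n (fst k))"

definition rho :: "nat \<Rightarrow> hvec \<Rightarrow> hvec" where
  "rho n v = (\<lambda>k. if k = (0, 1) then v (0, 0) / of_nat (n - 2) else 0)"

(* diagonal entry of lambda^(theta - s - 1/2) / Gamma(theta - s + 1/2),
   lambda lifted to the universal cover: u = log lambda *)
definition fdiag :: "nat \<Rightarrow> nat \<times> nat \<Rightarrow> complex \<Rightarrow> complex \<Rightarrow> complex" where
  "fdiag n k s u = exp ((theta n k - s - 1/2) * u) * rGamma (theta n k - s + 1/2)"

(* m <= -1: exp(-rho d_lambda d_m) applied, rho^2 = 0 so the series stops;
   d_lambda = exp(-u) d_u in the coordinate u = log lambda *)
definition Itil_neg :: "nat \<Rightarrow> int \<Rightarrow> hvec \<Rightarrow> complex \<Rightarrow> hvec" where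
  "Itil_neg n m v u =
     (\<lambda>k. fdiag n k (of_int m) u * v k)
   - rho n (\<lambda>k. exp (- u) * deriv (\<lambda>u'. deriv (\<lambda>s. fdiag n k s u') (of_int m)) u * v k)"

definition Dlam :: "(complex \<Rightarrow> hvec) \<Rightarrow> complex \<Rightarrow> hvec" where
  "Dlam F = (\<lambda>u. \<lambda>k. exp (- u) * deriv (\<lambda>u'. F u' k) u)"

definition Itil :: "nat \<Rightarrow> int \<Rightarrow> hvec \<Rightarrow> complex \<Rightarrow> hvec" where
  "Itil n m v = (if m \<le> -1 then Itil_neg n m v
                 else (Dlam ^^ nat (m + 1)) (Itil_neg n (-1) v))"

definition ItilK :: "nat \<Rightarrow> complex \<Rightarrow> int \<Rightarrow> kpoly \<Rightarrow> complex \<Rightarrow> hvec" where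
  "ItilK n logQ m E = Itil n m (Psi n logQ E)"

(* "sigma(E) = F": continuation counterclockwise around 0 (u -> u + 2 pi i)
   of I~^{(m)}_E equals I~^{(m)}_F, for all m *)
definition monodromy :: "nat \<Rightarrow> complex \<Rightarrow> kpoly \<Rightarrow> kpoly \<Rightarrow> bool" where
  "monodromy n logQ E F \<longleftrightarrow>
     (\<forall>m::int. \<forall>u. ItilK n logQ m E (u + 2 * pi * \<i>) = ItilK n logQ m F u)"

definition eps1 :: "nat \<Rightarrow> kpoly" where
  "eps1 i = L1 ^ i + cst (1/2) * (L2 + L3) - 1"
definition eps2 :: kpoly where "eps2 = cst (1/2) * (L2 + L3) - 1"
definition eps3 :: kpoly where "eps3 = cst (1/2) * (L2 - L3)"

fun Cl :: "nat \<Rightarrow> complex \<Rightarrow> nat \<Rightarrow> complex" where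
  "Cl n logQ 0 = of_nat (n - 2) * logQ"
| "Cl n logQ (Suc l) = Cl n logQ l + 1 / of_nat (Suc l)"

end

theory Submission
  imports Defs
begin

definition rh :: "('a::comm_ring_1 \<Rightarrow> 'b::comm_ring_1) \<Rightarrow> bool" where
  "rh h \<longleftrightarrow> h 0 = 0 \<and> h 1 = 1 \<and> (\<forall>x y. h (x + y) = h x + h y) \<and> (\<forall>x y. h (x * y) = h x * h y)"

lemma map_poly_add_hom:
  assumes "h 0 = 0" "\<And>x y. h (x + y) = h x + h y"
  shows "map_poly h (p + q) = map_poly h p + map_poly h q"
  by (intro poly_eqI) (simp add: coeff_map_poly assms)

lemma map_poly_mult_hom:
  fixes h :: "'a::comm_ring_1 \<Rightarrow> 'b::comm_ring_1"
  assumes "h 0 = 0" "\<And>x y. h (x + y) = h x + h y" "\<And>x y. h (x * y) = h x * h y"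
  shows "map_poly h (p * q) = map_poly h p * map_poly h q"
proof (induction p)
  case (pCons a p)
  have "map_poly h (pCons a p * q) = map_poly h (smult a q) + map_poly h (pCons 0 (p * q))"
    by (simp add: map_poly_add_hom assms)
  also have "\<dots> = smult (h a) (map_poly h q) + pCons 0 (map_poly h p * map_poly h q)"
    using pCons by (simp add: map_poly_smult map_poly_pCons assms)
  also have "\<dots> = map_poly h (pCons a p) * map_poly h q"
    by (simp add: map_poly_pCons assms)
  finally show ?case .
qed simp

lemma rh_poly: "rh (\<lambda>p. poly p x)"
  by (simp add: rh_def)

lemma rh_lift:
  assumes "rh h" shows "rh (\<lambda>p. poly (map_poly h p) x)"
  using assms unfolding rh_def
  by (simp add: map_poly_add_hom map_poly_mult_hom)

lemma rh_ev3: "rh (\<lambda>P. ev3 P x1 x2 x3)"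
  unfolding ev3_def by (intro rh_lift rh_poly)

lemma rh_minus: "rh h \<Longrightarrow> h (- x) = - h x"
  unfolding rh_def by (metis add.right_inverse add_eq_0_iff)
lemma rh_diff: "rh h \<Longrightarrow> h (x - y) = h x - h y"
  using rh_minus[of h y] unfolding rh_def by (metis diff_conv_add_uminus)
lemma rh_power: "rh h \<Longrightarrow> h (x ^ k) = h x ^ k"
  unfolding rh_def by (induction k) auto

lemma ev3_add[simp]: "ev3 (P + Q) x1 x2 x3 = ev3 P x1 x2 x3 + ev3 Q x1 x2 x3"
  using rh_ev3[of x1 x2 x3] unfolding rh_def by blast
lemma ev3_mult[simp]: "ev3 (P * Q) x1 x2 x3 = ev3 P x1 x2 x3 * ev3 Q x1 x2 x3"
  using rh_ev3[of x1 x2 x3] unfolding rh_def by blast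
lemma ev3_one[simp]: "ev3 1 x1 x2 x3 = 1"
  using rh_ev3[of x1 x2 x3] unfolding rh_def by blast
lemma ev3_zero[simp]: "ev3 0 x1 x2 x3 = 0"
  using rh_ev3[of x1 x2 x3] unfolding rh_def by blast
lemma ev3_minus[simp]: "ev3 (- P) x1 x2 x3 = - ev3 P x1 x2 x3"
  using rh_minus[OF rh_ev3] .
lemma ev3_diff[simp]: "ev3 (P - Q) x1 x2 x3 = ev3 P x1 x2 x3 - ev3 Q x1 x2 x3"
  using rh_diff[OF rh_ev3] .
lemma ev3_power[simp]: "ev3 (P ^ k) x1 x2 x3 = ev3 P x1 x2 x3 ^ k"
  using rh_power[OF rh_ev3] .
lemma ev3_L1[simp]: "ev3 L1 x1 x2 x3 = x1"
  by (simp add: ev3_def L1_def map_poly_pCons)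
lemma ev3_L2[simp]: "ev3 L2 x1 x2 x3 = x2"
  by (simp add: ev3_def L2_def map_poly_pCons)
lemma ev3_L3[simp]: "ev3 L3 x1 x2 x3 = x3"
  by (simp add: ev3_def L3_def map_poly_pCons)
lemma ev3_cst[simp]: "ev3 (cst c) x1 x2 x3 = c"
  by (simp add: ev3_def cst_def map_poly_pCons)

definition der :: "('a::comm_ring_1 \<Rightarrow> 'a) \<Rightarrow> bool" where
  "der D \<longleftrightarrow> D 0 = 0 \<and> (\<forall>x y. D (x + y) = D x + D y) \<and> (\<forall>x y. D (x * y) = D x * y + x * D y)"

lemma der_pderiv: "der pderiv"
  by (simp add: der_def pderiv_add pderiv_mult)

lemma der_lift:
  assumes "der D" shows "der (map_poly D)"
proof -
  have D0: "D 0 = 0" and Da: "\<And>x y. D (x + y) = D x + D y" and Dm: "\<And>x y. D (x * y) = D x * y + x * D y"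
    using assms by (auto simp: der_def)
  have sm: "map_poly D (smult a q) = smult (D a) q + smult a (map_poly D q)" for a q
    by (intro poly_eqI) (simp add: coeff_map_poly D0 Dm)
  have "map_poly D (p * q) = map_poly D p * q + p * map_poly D q" for p q
  proof (induction p)
    case (pCons a p)
    have "map_poly D (pCons a p * q) = map_poly D (smult a q) + map_poly D (pCons 0 (p * q))"
      by (simp add: map_poly_add_hom D0 Da)
    also have "\<dots> = smult (D a) q + smult a (map_poly D q) + pCons 0 (map_poly D p * q + p * map_poly D q)"
      using pCons by (simp add: sm map_poly_pCons D0)
    also have "\<dots> = map_poly D (pCons a p) * q + pCons a p * map_poly D q"
      by (simp add: map_poly_pCons D0 algebra_simps)
    finally show ?case .
  qed simp
  then show ?thesis by (simp add: der_def map_poly_add_hom D0 Da)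
qed

lemma der_d1: "der d1" unfolding d1_def[abs_def] by (intro der_lift der_pderiv)
lemma der_d2: "der d2" unfolding d2_def[abs_def] by (intro der_lift der_pderiv)
lemma der_d3: "der d3" unfolding d3_def[abs_def] by (intro der_pderiv)

lemma d1_L: "d1 L1 = 1" "d1 L2 = 0" "d1 L3 = 0" "d1 (cst c) = 0" "d1 1 = 0"
  by (simp_all add: d1_def L1_def L2_def L3_def cst_def map_poly_pCons pderiv_pCons map_poly_1 one_pCons[symmetric])
lemma d2_L: "d2 L1 = 0" "d2 L2 = 1" "d2 L3 = 0" "d2 (cst c) = 0" "d2 1 = 0"
  by (simp_all add: d2_def L1_def L2_def L3_def cst_def map_poly_pCons pderiv_pCons map_poly_1 one_pCons[symmetric])
lemma d3_L: "d3 L1 = 0" "d3 L2 = 0" "d3 L3 = 1" "d3 (cst c) = 0" "d3 1 = 0"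
  by (simp_all add: d3_def L1_def L2_def L3_def cst_def map_poly_pCons pderiv_pCons map_poly_1 one_pCons[symmetric])


lemma rk_simps[simp]: "rk (P + Q) = rk P + rk Q" "rk (P * Q) = rk P * rk Q" "rk (P - Q) = rk P - rk Q"
  "rk (- P) = - rk P" "rk 1 = 1" "rk 0 = 0" "rk (P ^ k) = rk P ^ k" "rk L1 = 1" "rk L2 = 1" "rk L3 = 1" "rk (cst c) = c"
  by (simp_all add: rk_def)

lemma rk_der: assumes "der d" shows "rk (d (P * Q)) = rk (d P) * rk Q + rk P * rk (d Q)"
  and "rk (d (P + Q)) = rk (d P) + rk (d Q)"
  using assms by (simp_all add: der_def)

lemma der_minus: "der d \<Longrightarrow> d (- x) = - d x"
  unfolding der_def by (metis add.right_inverse add_eq_0_iff)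
lemma der_diff: "der d \<Longrightarrow> d (x - y) = d x - d y"
  using der_minus[of d y] unfolding der_def by (metis diff_conv_add_uminus)

lemma a_simps[simp]: "a n 0 = 1" "a n 1 = n - 2" "a n 2 = 2" "a n 3 = 2"
  by (simp_all add: a_def)

lemma degK_alt: "degK n P = rk (d1 P) / of_nat (n - 2) + rk (d2 P) / 2 + rk (d3 P) / 2"
  by (simp add: degK_def a_def)

lemma degK_mult[simp]: "degK n (P * Q) = degK n P * rk Q + rk P * degK n Q"
  unfolding degK_alt rk_der(1)[OF der_d1] rk_der(1)[OF der_d2] rk_der(1)[OF der_d3]
  by (simp add: algebra_simps add_divide_distrib diff_divide_distrib)
lemma degK_add[simp]: "degK n (P + Q) = degK n P + degK n Q"
  unfolding degK_alt rk_der(2)[OF der_d1] rk_der(2)[OF der_d2] rk_der(2)[OF der_d3]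
  by (simp add: algebra_simps add_divide_distrib diff_divide_distrib)
lemma degK_minus[simp]: "degK n (- P) = - degK n P"
  unfolding degK_alt der_minus[OF der_d1] der_minus[OF der_d2] der_minus[OF der_d3]
  by (simp add: algebra_simps add_divide_distrib diff_divide_distrib)
lemma degK_diff[simp]: "degK n (P - Q) = degK n P - degK n Q"
  unfolding degK_alt der_diff[OF der_d1] der_diff[OF der_d2] der_diff[OF der_d3]
  by (simp add: algebra_simps add_divide_distrib diff_divide_distrib)
lemma degK_atoms[simp]: "degK n 1 = 0" "degK n (cst c) = 0" "degK n L1 = 1 / of_nat (n - 2)"
  "degK n L2 = 1/2" "degK n L3 = 1/2"
  by (simp_all add: degK_alt d1_L d2_L d3_L)
lemma degK_power[simp]: "degK n (P ^ k) = of_nat k * rk P ^ (k - 1) * degK n P"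
proof (induction k)
  case (Suc k)
  then show ?case by (cases k) (simp_all add: algebra_simps)
qed simp

lemma chi_1: "chi n 1 p P = ev3 P (exp (- 2 * pi * \<i> * of_nat p / of_nat (n - 2))) 1 1"
  by (simp add: chi_def a_def)
lemma chi_2: "chi n 2 p P = ev3 P 1 (exp (- 2 * pi * \<i> * of_nat p / 2)) 1"
  by (simp add: chi_def)
lemma chi_3: "chi n 3 p P = ev3 P 1 1 (exp (- 2 * pi * \<i> * of_nat p / 2))"
  by (simp add: chi_def)

lemma zeta_pow: assumes "n \<ge> 3"
  shows "exp (- 2 * pi * \<i> * of_nat p / of_nat (n - 2)) ^ (n - 2) = 1"
proof -
  have "exp (- 2 * pi * \<i> * of_nat p / of_nat (n - 2)) ^ (n - 2)
      = exp (of_nat (n - 2) * (- 2 * pi * \<i> * of_nat p / of_nat (n - 2)))"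
    by (rule exp_of_nat_mult[symmetric])
  also have "of_nat (n - 2) * (- 2 * pi * \<i> * of_nat p / of_nat (n - 2)) = - (of_nat p * (2 * pi * \<i>))"
  proof -
    obtain m where m: "n = m + 3" using assms by (metis add.commute le_Suc_ex)
    have "(of_nat (n - 2) :: complex) = of_nat m + 1" by (simp add: m)
    moreover have "(of_nat m + 1 :: complex) \<noteq> 0" by (metis of_nat_Suc of_nat_eq_0_iff add.commute nat.distinct(1))
    ultimately show ?thesis by (simp add: field_simps)
  qed
  also have "exp \<dots> = 1" by (simp add: exp_minus exp_of_nat_mult)
  finally show ?thesis .
qed

lemma exp_half: "exp (- 2 * complex_of_real pi * \<i> * of_nat (1::nat) / 2) = -1"
proof -
  have "- 2 * complex_of_real pi * \<i> * of_nat (1::nat) / 2 = - (of_real pi * \<i>)" by simp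
  then show ?thesis by (simp add: exp_minus)
qed


lemma sum_fun_apply: "(sum f A) x = sum (\<lambda>a. f a x) A"
  by (induction A rule: infinite_finite_induct) auto

lemma dsum_apply:
  assumes "finite J" "\<And>j. finite (P j)"
  shows "(\<Sum>j\<in>J. \<Sum>p\<in>P j. scaleH (c j p) (phi j p)) (i, q) = (if i \<in> J \<and> q \<in> P i then c i q else 0)"
proof -
  have "(\<Sum>j\<in>J. \<Sum>p\<in>P j. scaleH (c j p) (phi j p)) (i, q) = (\<Sum>j\<in>J. \<Sum>p\<in>P j. if j = i then (if p = q then c j p else 0) else 0)"
    by (simp add: sum_fun_apply scaleH_def phi_def; intro sum.cong refl; auto)
  also have "\<dots> = (\<Sum>j\<in>J. if j = i then (\<Sum>p\<in>P j. if p = q then c j p else 0) else 0)"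
    by (intro sum.cong) auto
  also have "\<dots> = (if i \<in> J \<and> q \<in> P i then c i q else 0)"
    using assms by (simp add: sum.delta')
  finally show ?thesis .
qed

lemma Psi_apply:
  "Psi n logQ E (i, q) = (if (i, q) = (0, 0) then rk E else 0)
     + (if (i, q) = (0, 1) then - rk E * gammaC n logQ / of_nat (n - 2) + 2 * pi * \<i> * degK n E else 0)
     + (if i \<in> {1..3} \<and> q \<in> {1..a n i - 1} then Gamma (1 - of_nat q / of_nat (a n i)) * chi n i q E else 0)"
  unfolding Psi_def
  apply (subst plus_fun_apply)+
  apply (subst dsum_apply)
  apply (auto simp: scaleH_def phi_def)
  done

lemma Itil_neg_apply:
  "Itil_neg n m v u (i, q) = fdiag n (i, q) (of_int m) u * v (i, q)
     - (if (i, q) = (0, 1) then exp (- u) * deriv (\<lambda>u'. deriv (\<lambda>s. fdiag n (0, 0) s u') (of_int m)) u * v (0, 0) / of_nat (n - 2) else 0)"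
  by (simp add: Itil_neg_def rho_def)


lemma fdiag00: "fdiag n (0, 0) s u = exp (- s * u) * rGamma (1 - s)"
  by (simp add: fdiag_def theta_def algebra_simps)
lemma fdiag01: "fdiag n (0, 1) s u = exp ((- 1 - s) * u) * rGamma (- s)"
  by (simp add: fdiag_def theta_def algebra_simps)
lemma fdiagtw: "fdiag n (i, q) s u = exp ((- (of_nat q / of_nat (a n i)) - s) * u) * rGamma (1 - of_nat q / of_nat (a n i) - s)"
  unfolding fdiag_def theta_def fst_conv snd_conv
  by (intro arg_cong2[where f="(*)"] arg_cong[where f=exp] arg_cong[where f=rGamma]) (simp_all add: algebra_simps)

lemma pos_notin: "0 < Re z \<Longrightarrow> (z::complex) \<notin> \<int>\<^sub>\<le>\<^sub>0"
  by (auto elim!: nonpos_Ints_cases')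

lemma rGamma_nat1: "rGamma (of_nat l + 1 :: complex) = inverse (fact l)"
  using Gamma_fact[of l, where 'a=complex] by (simp add: rGamma_inverse_Gamma add.commute)
lemma rGamma_nat2: "rGamma (of_nat l + 2 :: complex) = inverse (fact (l + 1))"
proof -
  have "of_nat (l+1) + (1::complex) = of_nat l + 2" by simp
  then show ?thesis using rGamma_nat1[of "l + 1"] by metis
qed

lemma dfd_s:
  fixes u' :: complex and l :: nat
  defines "N \<equiv> of_nat l + 1 :: complex"
  shows "deriv (\<lambda>s. fdiag n (0, 0) s u') (- of_nat l - 1)
       = exp (N * u') * (rGamma (N + 1) * Digamma (N + 1) - u' * rGamma (N + 1))"
proof -
  have nz: "1 - (- of_nat l - 1) \<notin> (\<int>\<^sub>\<le>\<^sub>0 :: complex set)"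
    by (rule pos_notin) simp
  have d: "((\<lambda>s. rGamma (1 - s)) has_field_derivative (- rGamma (1 - s0) * Digamma (1 - s0)) * (- 1)) (at s0)"
    if "1 - s0 \<notin> \<int>\<^sub>\<le>\<^sub>0" for s0 :: complex
    by (rule DERIV_chain2[where g="\<lambda>s. 1 - s" and x=s0, OF has_field_derivative_rGamma_no_nonpos_int[OF that, where A=UNIV]])
       (auto intro!: derivative_eq_intros)
  have "((\<lambda>s. exp (- s * u') * rGamma (1 - s)) has_field_derivative
        (exp (- s0 * u') * (- u')) * rGamma (1 - s0) + exp (- s0 * u') * ((- rGamma (1 - s0) * Digamma (1 - s0)) * (- 1))) (at s0)"
    if "1 - s0 \<notin> \<int>\<^sub>\<le>\<^sub>0" for s0 :: complex
  proof -
    have e: "((\<lambda>s. exp (- s * u')) has_field_derivative exp (- s0 * u') * (- u')) (at s0)"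
      by (auto intro!: derivative_eq_intros)
    show ?thesis using DERIV_mult[OF e d[OF that]] by (simp add: algebra_simps)
  qed
  from DERIV_imp_deriv[OF this[OF nz]]
  show ?thesis unfolding fdiag00 N_def by (simp add: algebra_simps)
qed

lemma dfd_u:
  fixes N A B :: complex
  shows "deriv (\<lambda>u'. exp (N * u') * (A - u' * B)) u = exp (N * u) * N * (A - u * B) - exp (N * u) * B"
  by (rule DERIV_imp_deriv) (auto intro!: derivative_eq_intros simp: algebra_simps)

lemma gprod:
  fixes r :: real
  assumes "0 < r" "r < 1"
  shows "Gamma (1 - of_real r) * rGamma (of_nat N + 1 - of_real r) = 1 / (\<Prod>k\<in>{1..N}. (of_nat k - of_real r :: complex))"
proof (induction N)
  case 0
  have "(1 - of_real r :: complex) = of_real (1 - r)" by simp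
  moreover have "(of_real (1 - r) :: complex) \<notin> \<int>\<^sub>\<le>\<^sub>0"
    using assms by (intro pos_notin) simp
  ultimately have "Gamma (1 - of_real r :: complex) \<noteq> 0" by (metis Gamma_nonzero)
  then show ?case by (simp add: rGamma_inverse_Gamma)
next
  case (Suc N)
  have nz: "(of_nat (Suc N) - of_real r :: complex) \<noteq> 0"
  proof
    assume "(of_nat (Suc N) - of_real r :: complex) = 0"
    then have "Re (of_nat (Suc N) - of_real r :: complex) = 0" by simp
    then have "real (Suc N) = r" by simp
    with assms show False by simp
  qed
  have "rGamma (of_nat (Suc N) + 1 - of_real r :: complex) = rGamma (of_nat N + 1 - of_real r) / (of_nat (Suc N) - of_real r)"
    using rGamma_plus1[of "of_nat (Suc N) - of_real r :: complex"] nz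
    by (simp add: field_simps)
  then have "Gamma (1 - of_real r) * rGamma (of_nat (Suc N) + 1 - of_real r :: complex)
     = (Gamma (1 - of_real r) * rGamma (of_nat N + 1 - of_real r)) / (of_nat (Suc N) - of_real r)"
    by simp
  also have "\<dots> = 1 / ((\<Prod>k\<in>{1..N}. (of_nat k - of_real r :: complex)) * (of_nat (Suc N) - of_real r))"
    using Suc.IH by simp
  also have "(\<Prod>k\<in>{1..N}. (of_nat k - of_real r :: complex)) * (of_nat (Suc N) - of_real r)
     = (\<Prod>k\<in>{1..Suc N}. (of_nat k - of_real r :: complex))"
    by simp
  finally show ?case .
qed

lemma Cl_eq: "Cl n logQ l = gammaC n logQ + Digamma (of_nat l + 2) - 1 / (of_nat l + 1)"
proof (induction l)
  case 0
  have "deriv Gamma (1::complex) = Gamma 1 * Digamma 1"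
    by (rule DERIV_imp_deriv, rule has_field_derivative_Gamma) simp
  moreover have "Digamma (2::complex) = Digamma 1 + 1"
    using Digamma_plus1[of "1::complex"] by (simp add: one_add_one)
  ultimately show ?case by (simp add: gammaC_def)
next
  case (Suc l)
  have "Digamma (of_nat l + 2 + 1 :: complex) = Digamma (of_nat l + 2) + 1 / (of_nat l + 2)"
    by (rule Digamma_plus1) (metis of_nat_Suc of_nat_eq_0_iff add.commute nat.distinct(1) one_add_one add.assoc)
  then show ?case using Suc by (simp add: algebra_simps one_add_one)
qed


lemma rhs_apply:
  "(scaleH c00 (phi 0 0) + scaleH c01 (phi 0 1) + (\<Sum>j\<in>{1..3}. \<Sum>p\<in>{1..a n j - 1}. scaleH (c j p) (phi j p))) (i, q)
   = (if (i, q) = (0, 0) then c00 else 0) + (if (i, q) = (0, 1) then c01 else 0)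
     + (if i \<in> {1..3} \<and> q \<in> {1..a n i - 1} then c i q else 0)"
  apply (subst plus_fun_apply)+
  apply (subst dsum_apply)
  apply (auto simp: scaleH_def phi_def)
  done

lemma Itil_neg_formula:
  fixes l :: nat and u :: complex
  defines "N \<equiv> of_nat l + 1 :: complex"
  shows "Itil_neg n (- int l - 1) v u (i, q) = fdiag n (i, q) (- of_nat l - 1) u * v (i, q)
     - (if (i, q) = (0, 1) then exp (- u) * (exp (N * u) * N * (rGamma (N + 1) * Digamma (N + 1) - u * rGamma (N + 1))
          - exp (N * u) * rGamma (N + 1)) * v (0, 0) / of_nat (n - 2) else 0)"
proof -
  have "(\<lambda>u'. deriv (\<lambda>s. fdiag n (0, 0) s u') (- of_nat l - 1))
      = (\<lambda>u'. exp (N * u') * (rGamma (N + 1) * Digamma (N + 1) - u' * rGamma (N + 1)))"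
    by (rule ext) (simp add: dfd_s N_def)
  then show ?thesis
    by (simp add: Itil_neg_apply dfd_u)
qed

lemma exp_nat_shift: "exp ((of_nat l + 1) * u) = exp u * exp (of_nat l * u :: complex)"
  by (simp add: distrib_right exp_add)

lemma alg01:
  fixes E F M R G P Dg u eu L :: complex
  assumes "F \<noteq> 0" "M \<noteq> 0" "L \<noteq> 0" "eu \<noteq> 0"
  shows "E * (P - R * G / M) / F - inverse eu * (eu * E * L * (Dg / (L * F) - u / (L * F)) - eu * E / (L * F)) * R / M
        = E * (R * (u - (G + Dg - 1 / L)) / M + P) / F"
  using assms by (simp add: field_simps)

theorem formula:
  fixes l :: nat and u :: complex
  assumes n3: "n \<ge> 3"
  shows "ItilK n logQ (- int l - 1) \<alpha> u =
              scaleH (rk \<alpha> * exp (of_nat (l + 1) * u) / of_nat (fact (l + 1))) (phi 0 0)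
            + scaleH (exp (of_nat l * u) / of_nat (fact l) *
                 (rk \<alpha> * (u - Cl n logQ l) / of_nat (n - 2) + 2 * pi * \<i> * degK n \<alpha>)) (phi 0 1)
            + (\<Sum>j\<in>{1..3}. \<Sum>p\<in>{1..a n j - 1}.
                 scaleH (exp ((of_nat (l + 1) - of_nat p / of_nat (a n j)) * u)
                         / (\<Prod>k\<in>{1..l + 1}. (of_nat k - of_nat p / of_nat (a n j)))
                         * chi n j p \<alpha>) (phi j p))"
proof (rule ext)
  fix k :: "nat \<times> nat"
  obtain i q where k: "k = (i, q)" by (cases k)
  have M: "(of_nat (n - 2) :: complex) \<noteq> 0" using n3 by (simp only: of_nat_eq_0_iff)
  have Fz: "(fact l :: complex) \<noteq> 0" by simp
  have fsuc: "(fact (l + 1) :: complex) = (of_nat l + 1) * fact l" by simp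
  have ex: "exp (- u) * exp ((of_nat l + 1) * u) = exp (of_nat l * u)"
    by (subst exp_add[symmetric]) (simp add: algebra_simps)
  have LHS: "ItilK n logQ (- int l - 1) \<alpha> u (i, q) = Itil_neg n (- int l - 1) (Psi n logQ \<alpha>) u (i, q)"
    unfolding ItilK_def Itil_def by simp
  show "ItilK n logQ (- int l - 1) \<alpha> u k = (scaleH (rk \<alpha> * exp (of_nat (l + 1) * u) / of_nat (fact (l + 1))) (phi 0 0)
            + scaleH (exp (of_nat l * u) / of_nat (fact l) *
                 (rk \<alpha> * (u - Cl n logQ l) / of_nat (n - 2) + 2 * pi * \<i> * degK n \<alpha>)) (phi 0 1)
            + (\<Sum>j\<in>{1..3}. \<Sum>p\<in>{1..a n j - 1}.
                 scaleH (exp ((of_nat (l + 1) - of_nat p / of_nat (a n j)) * u)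
                         / (\<Prod>k\<in>{1..l + 1}. (of_nat k - of_nat p / of_nat (a n j)))
                         * chi n j p \<alpha>) (phi j p))) k"
  proof -
    consider "(i, q) = (0, 0)" | "(i, q) = (0, 1)" | "i \<in> {1..3} \<and> q \<in> {1..a n i - 1}"
      | "(i, q) \<noteq> (0, 0) \<and> (i, q) \<noteq> (0, 1) \<and> \<not> (i \<in> {1..3} \<and> q \<in> {1..a n i - 1})" by blast
    then show ?thesis
    proof cases
      case 1
      then show ?thesis unfolding k LHS rhs_apply Itil_neg_formula
        by (simp add: Psi_apply fdiag00 rGamma_nat2 field_simps)
    next
      case 2
      show ?thesis
      proof -
        have f01: "fdiag n (0, Suc 0) (- of_nat l - 1) u = exp (of_nat l * u) / fact l"
        proof -
          have "rGamma (1 + of_nat l :: complex) = inverse (fact l)" using rGamma_nat1[of l] by (simp add: add.commute)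
          then show ?thesis using fdiag01[of n "- of_nat l - 1" u] by (simp add: field_simps)
        qed
        have B: "rGamma (2 + of_nat l :: complex) = 1 / ((of_nat l + 1) * fact l)"
          using rGamma_nat2[of l] by (simp add: add.commute field_simps)
        have D: "Digamma (of_nat l + 2 :: complex) = Digamma (2 + of_nat l)" by (simp add: add.commute)
        have l1: "(of_nat l + 1 :: complex) \<noteq> 0" by (metis of_nat_Suc of_nat_eq_0_iff add.commute nat.distinct(1))
        have eu: "exp u \<noteq> 0" by simp
        obtain MM where MM_def: "MM = (of_nat (n - 2) :: complex)" by blast
        have MM: "MM \<noteq> 0" using M unfolding MM_def .
        show ?thesis using 2 unfolding k LHS rhs_apply Itil_neg_formula
          apply (simp add: Psi_apply f01 B D exp_nat_shift exp_minus Cl_eq MM_def[symmetric])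
          apply (rule alg01[OF Fz MM l1 eu])
          done
      qed
    next
      case 3
      then have i3: "i \<in> {1..3}" and q3: "q \<in> {1..a n i - 1}" by auto
      have ne: "(i, q) \<noteq> (0, 0)" "(i, q) \<noteq> (0, 1)" using i3 by auto
      define r where "r = real q / real (a n i)"
      have r01: "0 < r" "r < 1" using q3 by (auto simp: r_def field_simps)
      have x: "(of_nat q / of_nat (a n i) :: complex) = of_real r" by (simp add: r_def)
      have g: "Gamma (1 - of_real r) * rGamma (of_nat (l + 1) + 1 - of_real r) = 1 / (\<Prod>k\<in>{1..l + 1}. (of_nat k - of_real r :: complex))"
        by (rule gprod[OF r01])
      have e1: "1 - of_real r - (- of_nat l - 1) = of_nat (l+1) + 1 - (of_real r::complex)" by simp
      have e2: "(- of_real r - (- of_nat l - 1)) = (of_nat (l+1) - of_real r :: complex)" by simp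
      show ?thesis using 3 ne unfolding k LHS rhs_apply Itil_neg_formula
        apply (simp only: Psi_apply fdiagtw x if_False if_True ne simp_thms)
        apply (simp only: e1 e2 add_0_left diff_zero divide_inverse)
        apply (subst inverse_eq_divide)
        apply (subst g[symmetric])
        apply (simp add: ac_simps)
        done
    next
      case 4
      then show ?thesis unfolding k LHS rhs_apply Itil_neg_formula by (auto simp: Psi_apply)
    qed
  qed
qed


lemma deriv_shift: "deriv f (x + z) = deriv (\<lambda>x. f (x + z)) x"
  by (simp add: deriv_def DERIV_shift)

lemma exp_2pii_nat: "exp (of_nat N * (2 * complex_of_real pi * \<i>)) = 1"
  by (simp add: exp_of_nat_mult)

lemma exp_m2pii: "exp (- (2 * complex_of_real pi * \<i>)) = 1"
  by (simp add: exp_minus)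

lemma Dlam_shift:
  assumes "\<And>u. F (u + 2 * complex_of_real pi * \<i>) = G u"
  shows "Dlam F (u + 2 * complex_of_real pi * \<i>) = Dlam G u"
proof -
  let ?c = "2 * complex_of_real pi * \<i>"
  have "- (u + ?c) = - u + - ?c" by simp
  then have e: "exp (- (u + ?c)) = exp (- u)"
    by (simp only: exp_add exp_m2pii mult_1_right)
  have "deriv (\<lambda>u'. F u' k) (u + ?c) = deriv (\<lambda>u'. G u' k) u" for k
    by (subst deriv_shift) (simp add: assms)
  then show ?thesis unfolding Dlam_def e by simp
qed

lemma Dlam_pow_shift:
  assumes "\<And>u. F (u + 2 * complex_of_real pi * \<i>) = G u"
  shows "(Dlam ^^ j) F (u + 2 * complex_of_real pi * \<i>) = (Dlam ^^ j) G u"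
proof (induction j arbitrary: u)
  case 0 then show ?case using assms by simp
next
  case (Suc j) then show ?case by (simp add: Dlam_shift)
qed

lemma coef01: "x * (u + c - C) / M + c * d = x * (u - C) / M + c * (d + x / M)"
  for x u c C M d :: complex
  by (simp add: algebra_simps add_divide_distrib diff_divide_distrib)

lemma exp_tw:
  fixes N :: nat and x u :: complex
  shows "exp ((of_nat N - x) * (u + 2 * complex_of_real pi * \<i>)) = exp ((of_nat N - x) * u) * exp (- 2 * complex_of_real pi * \<i> * x)"
proof -
  have "(of_nat N - x) * (u + 2 * complex_of_real pi * \<i>) = (of_nat N - x) * u + (of_nat N * (2 * complex_of_real pi * \<i>) + (- 2 * complex_of_real pi * \<i> * x))"
    by (simp add: algebra_simps)
  then show ?thesis by (simp only: exp_add exp_2pii_nat) simp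
qed

lemma monodromy_suff:
  assumes n3: "n \<ge> 3"
    and r: "rk F = rk E"
    and d: "degK n F = degK n E + rk E / of_nat (n - 2)"
    and c: "\<And>j p. j \<in> {1..3} \<Longrightarrow> p \<in> {1..a n j - 1} \<Longrightarrow>
              chi n j p F = exp (- 2 * pi * \<i> * of_nat p / of_nat (a n j)) * chi n j p E"
  shows "monodromy n logQ E F"
proof -
  let ?c = "2 * complex_of_real pi * \<i>"
  have neg: "ItilK n logQ (- int l - 1) E (u + ?c) = ItilK n logQ (- int l - 1) F u" for l u
  proof -
    have pc: "complex_of_real (2 * pi) * \<i> = ?c" by simp
    have c00: "rk E * exp (of_nat (l + 1) * (u + ?c)) / of_nat (fact (l + 1)) = rk F * exp (of_nat (l + 1) * u) / of_nat (fact (l + 1))"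
      by (simp only: r distrib_left exp_add exp_2pii_nat mult_1_right)
    have c01: "exp (of_nat l * (u + ?c)) / of_nat (fact l) *
                 (rk E * (u + ?c - Cl n logQ l) / of_nat (n - 2) + 2 * pi * \<i> * degK n E)
             = exp (of_nat l * u) / of_nat (fact l) *
                 (rk F * (u - Cl n logQ l) / of_nat (n - 2) + 2 * pi * \<i> * degK n F)"
      unfolding pc coef01 r d by (simp add: distrib_left exp_add exp_2pii_nat)
    have ctw: "(\<Sum>j\<in>{1..3}. \<Sum>p\<in>{1..a n j - 1}.
                 scaleH (exp ((of_nat (l + 1) - of_nat p / of_nat (a n j)) * (u + ?c))
                         / (\<Prod>k\<in>{1..l + 1}. (of_nat k - of_nat p / of_nat (a n j)))
                         * chi n j p E) (phi j p))
            = (\<Sum>j\<in>{1..3}. \<Sum>p\<in>{1..a n j - 1}.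
                 scaleH (exp ((of_nat (l + 1) - of_nat p / of_nat (a n j)) * u)
                         / (\<Prod>k\<in>{1..l + 1}. (of_nat k - of_nat p / of_nat (a n j)))
                         * chi n j p F) (phi j p))"
    proof (intro sum.cong refl)
      fix j p assume j: "j \<in> {1..3}" and p: "p \<in> {1..a n j - 1}"
      show "scaleH (exp ((of_nat (l + 1) - of_nat p / of_nat (a n j)) * (u + ?c))
                         / (\<Prod>k\<in>{1..l + 1}. (of_nat k - of_nat p / of_nat (a n j)))
                         * chi n j p E) (phi j p) =
            scaleH (exp ((of_nat (l + 1) - of_nat p / of_nat (a n j)) * u)
                         / (\<Prod>k\<in>{1..l + 1}. (of_nat k - of_nat p / of_nat (a n j)))
                         * chi n j p F) (phi j p)"
        unfolding exp_tw c[OF j p] by (simp add: ac_simps)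
    qed
    show ?thesis
      apply (unfold formula[OF n3])
      apply (intro arg_cong2[where f="(+)"] arg_cong2[where f=scaleH] refl)
      apply (rule c00)
      apply (rule c01)
      apply (rule ctw)
      done
  qed
  have pc0: "complex_of_real (2 * pi) * \<i> = ?c" by simp
  show ?thesis unfolding monodromy_def pc0
  proof (intro allI)
    fix m :: int and u
    show "ItilK n logQ m E (u + ?c) = ItilK n logQ m F u"
    proof (cases "m \<le> -1")
      case True
      then have "m = - int (nat (- m - 1)) - 1" by simp
      then show ?thesis using neg by metis
    next
      case False
      have base: "Itil_neg n (-1) (Psi n logQ E) (u' + ?c) = Itil_neg n (-1) (Psi n logQ F) u'" for u'
        using neg[of 0 u'] unfolding ItilK_def Itil_def by simp
      show ?thesis using False unfolding ItilK_def Itil_def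
        by (simp add: Dlam_pow_shift[where F="Itil_neg n (-1) (Psi n logQ E)" and G="Itil_neg n (-1) (Psi n logQ F)", OF base])
    qed
  qed
qed


lemma chi_2': "chi n 2 (Suc 0) P = ev3 P 1 (-1) 1"
proof -
  have "exp (- 2 * pi * \<i> * of_nat (Suc 0) / 2) = -1"
  proof -
    have "- 2 * pi * \<i> * of_nat (Suc 0) / 2 = - (complex_of_real pi * \<i>)" by simp
    then show ?thesis by (simp add: exp_minus)
  qed
  then show ?thesis by (simp add: chi_2)
qed
lemma chi_3': "chi n 3 (Suc 0) P = ev3 P 1 1 (-1)"
proof -
  have "exp (- 2 * pi * \<i> * of_nat (Suc 0) / 2) = -1"
  proof -
    have "- 2 * pi * \<i> * of_nat (Suc 0) / 2 = - (complex_of_real pi * \<i>)" by simp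
    then show ?thesis by (simp add: exp_minus)
  qed
  then show ?thesis by (simp add: chi_3)
qed

lemma mono_by_chi:
  assumes n3: "n \<ge> 3"
    and r: "rk F = rk E"
    and d: "degK n F = degK n E + rk E / of_nat (n - 2)"
    and c1: "\<And>p. ev3 F (exp (- 2 * pi * \<i> * of_nat p / of_nat (n - 2))) 1 1
               = exp (- 2 * pi * \<i> * of_nat p / of_nat (n - 2)) * ev3 E (exp (- 2 * pi * \<i> * of_nat p / of_nat (n - 2))) 1 1"
    and c2: "ev3 F 1 (-1) 1 = - ev3 E 1 (-1) 1"
    and c3: "ev3 F 1 1 (-1) = - ev3 E 1 1 (-1)"
  shows "monodromy n logQ E F"
proof (rule monodromy_suff[OF n3 r d])
  fix j p assume j: "j \<in> {1..3}" and p: "p \<in> {1..a n j - 1}"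
  have h: "exp (- 2 * pi * \<i> * of_nat (Suc 0) / 2) = -1"
  proof -
    have "- 2 * pi * \<i> * of_nat (Suc 0) / 2 = - (complex_of_real pi * \<i>)" by simp
    then show ?thesis by (simp add: exp_minus)
  qed
  from j consider "j = 1" | "j = 2" | "j = 3" by fastforce
  then show "chi n j p F = exp (- 2 * pi * \<i> * of_nat p / of_nat (a n j)) * chi n j p E"
  proof cases
    case 1 show ?thesis using c1[of p] unfolding 1 chi_1 a_simps by simp
  next
    case 2
    then have "p = Suc 0" using p by simp
    then show ?thesis using 2 c2 h by (simp add: chi_2')
  next
    case 3
    then have "p = Suc 0" using p by simp
    then show ?thesis using 3 c3 h by (simp add: chi_3')
  qed
qed


lemma n2: "n \<ge> 3 \<Longrightarrow> (of_nat n :: complex) \<noteq> 2"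
  by (metis of_nat_numeral of_nat_eq_iff numeral_2_eq_2 not_less_eq_eq numeral_3_eq_3 order_refl)

lemma nz2: "n \<ge> 3 \<Longrightarrow> (of_nat n :: complex) - 2 \<noteq> 0"
  using n2 by simp

lemma rk_Lcls[simp]: "rk (Lcls n) = 1" by (simp add: Lcls_def)
lemma rk_Tcls[simp]: "rk (Tcls n) = 1" by (simp add: Tcls_def)
lemma degK_Lcls: "n \<ge> 3 \<Longrightarrow> degK n (Lcls n) = 1"
  unfolding Lcls_def degK_power using nz2[of n] by (simp add: of_nat_diff)
lemma degK_Tcls: "n \<ge> 3 \<Longrightarrow> degK n (Tcls n) = 1 / of_nat (n - 2)"
  unfolding Tcls_def using degK_Lcls[of n] by simp
lemma ev3_Lcls1: "n \<ge> 3 \<Longrightarrow> ev3 (Lcls n) (exp (- 2 * pi * \<i> * of_nat p / of_nat (n - 2))) 1 1 = 1"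
  unfolding Lcls_def ev3_power ev3_L1 by (rule zeta_pow)
lemma ev3_Lcls1': "n \<ge> 3 \<Longrightarrow> ev3 (Lcls n) (exp (- (2 * complex_of_real pi * \<i> * complex_of_nat p / (complex_of_nat n - 2)))) 1 1 = 1"
  using ev3_Lcls1[of n p] by (simp add: of_nat_diff)
lemma ev3_Lcls1'':
  assumes "n \<ge> 3"
  shows "ev3 (Lcls n) (exp (- (2 * complex_of_real pi * \<i> * complex_of_nat p / complex_of_nat (n - 2)))) 1 1 = 1"
proof -
  have eq: "- 2 * pi * \<i> * of_nat p / of_nat (n-2) = - (2 * complex_of_real pi * \<i> * complex_of_nat p / complex_of_nat (n - 2))"
    by simp
  show ?thesis using ev3_Lcls1[OF assms, of p] eq by metis
qed
lemma ev3_Lcls2: "ev3 (Lcls n) 1 x y = 1"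
  unfolding Lcls_def by simp

lemma degK_zero[simp]: "degK n 0 = 0"
  using degK_diff[of n 1 1] by simp
lemma ev3_of_nat: "ev3 (of_nat k) x1 x2 x3 = of_nat k"
  by (induction k) simp_all
lemma ev3_numeral[simp]: "ev3 (numeral w) x1 x2 x3 = numeral w"
  using ev3_of_nat[of "numeral w"] by simp
lemma rk_numeral[simp]: "rk (numeral w) = numeral w"
  by (simp add: rk_def)
lemma degK_of_nat: "degK n (of_nat k) = 0"
  by (induction k) simp_all
lemma degK_numeral[simp]: "degK n (numeral w) = 0"
  using degK_of_nat[of n "numeral w"] by simp

theorem proposition4:
  fixes n :: nat and logQ :: complex
  assumes "n \<ge> 3"
  shows "(\<forall>\<alpha> (l::nat) (u::complex). Kint \<alpha> \<longrightarrow>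
            ItilK n logQ (- int l - 1) \<alpha> u =
              scaleH (rk \<alpha> * exp (of_nat (l + 1) * u) / of_nat (fact (l + 1))) (phi 0 0)
            + scaleH (exp (of_nat l * u) / of_nat (fact l) *
                 (rk \<alpha> * (u - Cl n logQ l) / of_nat (n - 2) + 2 * pi * \<i> * degK n \<alpha>)) (phi 0 1)
            + (\<Sum>j\<in>{1..3}. \<Sum>p\<in>{1..a n j - 1}.
                 scaleH (exp ((of_nat (l + 1) - of_nat p / of_nat (a n j)) * u)
                         / (\<Prod>k\<in>{1..l + 1}. (of_nat k - of_nat p / of_nat (a n j)))
                         * chi n j p \<alpha>) (phi j p)))
       \<and> (\<forall>\<alpha>. Kint \<alpha> \<longrightarrow> monodromy n logQ \<alpha> (\<alpha> * Tcls n))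
       \<and> (\<forall>i\<in>{1..n - 3}. monodromy n logQ (eps1 i) (eps1 (i + 1)))
       \<and> monodromy n logQ (eps1 (n - 2)) (eps1 1 + Lcls n - 1)
       \<and> monodromy n logQ eps2 (- eps2 + Lcls n - 1)
       \<and> monodromy n logQ eps3 (- eps3)"
proof (intro conjI allI impI ballI)
  fix \<alpha> :: kpoly and l :: nat and u :: complex
  show "ItilK n logQ (- int l - 1) \<alpha> u =
              scaleH (rk \<alpha> * exp (of_nat (l + 1) * u) / of_nat (fact (l + 1))) (phi 0 0)
            + scaleH (exp (of_nat l * u) / of_nat (fact l) *
                 (rk \<alpha> * (u - Cl n logQ l) / of_nat (n - 2) + 2 * pi * \<i> * degK n \<alpha>)) (phi 0 1)
            + (\<Sum>j\<in>{1..3}. \<Sum>p\<in>{1..a n j - 1}.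
                 scaleH (exp ((of_nat (l + 1) - of_nat p / of_nat (a n j)) * u)
                         / (\<Prod>k\<in>{1..l + 1}. (of_nat k - of_nat p / of_nat (a n j)))
                         * chi n j p \<alpha>) (phi j p))"
    by (rule formula[OF assms])
next
  fix \<alpha> :: kpoly
  show "monodromy n logQ \<alpha> (\<alpha> * Tcls n)"
    apply (rule mono_by_chi[OF assms])
    using assms apply (simp_all add: degK_Tcls)
    apply (simp_all add: Tcls_def ev3_Lcls1'[OF assms] ev3_Lcls1''[OF assms] ev3_Lcls2)
    done
next
  fix i assume i: "i \<in> {1..n - 3}"
  show "monodromy n logQ (eps1 i) (eps1 (i + 1))"
    apply (rule mono_by_chi[OF assms])
    apply (simp_all add: eps1_def)
    done
next
  show "monodromy n logQ (eps1 (n - 2)) (eps1 1 + Lcls n - 1)"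
    apply (rule mono_by_chi[OF assms])
    apply (simp_all add: eps1_def Lcls_def[symmetric] degK_Lcls[OF assms] ev3_Lcls1'[OF assms] ev3_Lcls1''[OF assms] ev3_Lcls2)
    done
next
  show "monodromy n logQ eps2 (- eps2 + Lcls n - 1)"
    apply (rule mono_by_chi[OF assms])
    apply (simp_all add: eps2_def degK_Lcls[OF assms] ev3_Lcls1'[OF assms] ev3_Lcls1''[OF assms] ev3_Lcls2)
    done
next
  show "monodromy n logQ eps3 (- eps3)"
    apply (rule mono_by_chi[OF assms])
    apply (simp_all add: eps3_def)
    done
qed

end
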